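(* Let $f,g\in\mathrm{Diffeo}^-(\mathbb{R})$ with $f(0)=g(0)=0$ and $f\circ f=g\circ g$. Suppose $0$ is an interior point of $\mathrm{fix}(f\circ f)=\{x\in\mathbb{R}: f(f(x))=x\}$. Then there exists $h\in\mathrm{Diffeo}^+(\mathbb{R})$ with $h(0)=0$, commuting with $f\circ f$, such that $T_0f=(T_0h)^{-1}\circ(T_0g)\circ(T_0h)$; and hence $f$ is conjugate to $g$ by an element of $\mathrm{Diffeo}^+(\mathbb{R})$.
   Context: $\mathrm{Diffeo}(\mathbb{R})$ is the group of $C^\infty$ diffeomorphisms of $\mathbb{R}$ under composition; $\mathrm{Diffeo}^+(\mathbb{R})$ (resp. $\mathrm{Diffeo}^-(\mathbb{R})$) is the set of orientation-preserving (resp. orientation-reversing) diffeomorphisms. For a diffeomorphism $\phi$ with $\phi(0)=0$, $T_0\phi=\phi'(0)X+\frac{\phi''(0)}{2}X^2+\cdots$ is its Taylor series at $0$, an element of the group of formally invertible real formal power series under formal composition, with $^{-1}$ the compositional inverse. *)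

theory Defs
  imports "HOL-Analysis.Analysis" "HOL-Computational_Algebra.Formal_Power_Series"
begin

definition smooth_real :: "(real \<Rightarrow> real) \<Rightarrow> bool" where
  "smooth_real f \<longleftrightarrow> (\<forall>n x. ((deriv ^^ n) f) differentiable (at x))"

definition diffeo :: "(real \<Rightarrow> real) \<Rightarrow> bool" where
  "diffeo f \<longleftrightarrow> bij f \<and> smooth_real f \<and> smooth_real (inv f)"

definition diffeo_plus :: "(real \<Rightarrow> real) \<Rightarrow> bool" where
  "diffeo_plus f \<longleftrightarrow> diffeo f \<and> strict_mono f"

definition diffeo_minus :: "(real \<Rightarrow> real) \<Rightarrow> bool" where
  "diffeo_minus f \<longleftrightarrow> diffeo f \<and> (\<forall>x y. x < y \<longrightarrow> f y < f x)"

definition taylor0 :: "(real \<Rightarrow> real) \<Rightarrow> real fps" where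
  "taylor0 f = Abs_fps (\<lambda>n. (deriv ^^ n) f 0 / fact n)"

end

theory Submission
  imports Defs "HOL-Computational_Algebra.Polynomial"
begin


lemma smooth_const: "smooth_real (\<lambda>_. c)"
proof -
  have "\<forall>c. \<exists>c'. (deriv ^^ n) (\<lambda>_::real. c::real) = (\<lambda>_. c')" for n
  proof (induction n)
    case 0 then show ?case by auto
  next
    case (Suc n)
    show ?case
    proof
      fix c :: real
      have "deriv (\<lambda>_::real. c) = (\<lambda>_. 0)" by (rule ext) simp
      then show "\<exists>c'. (deriv ^^ Suc n) (\<lambda>_::real. c) = (\<lambda>_. c')"
        using Suc by (simp add: funpow_Suc_right del: funpow.simps)
    qed
  qed
  then show ?thesis unfolding smooth_real_def by (metis differentiable_const)
qed

lemma smooth_deriv: "smooth_real f \<Longrightarrow> smooth_real (deriv f)"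
  unfolding smooth_real_def by (metis comp_apply funpow_Suc_right)

lemma smooth_DERIV: "smooth_real f \<Longrightarrow> DERIV f x :> deriv f x"
  unfolding smooth_real_def
  by (metis DERIV_deriv_iff_real_differentiable funpow_0)

inductive_set SK :: "(real \<Rightarrow> real) set" where
  base: "smooth_real f \<Longrightarrow> f \<in> SK"
| add: "f \<in> SK \<Longrightarrow> g \<in> SK \<Longrightarrow> (\<lambda>x. f x + g x) \<in> SK"
| mult: "f \<in> SK \<Longrightarrow> g \<in> SK \<Longrightarrow> (\<lambda>x. f x * g x) \<in> SK"
| comp: "f \<in> SK \<Longrightarrow> g \<in> SK \<Longrightarrow> (\<lambda>x. f (g x)) \<in> SK"
| recip: "f \<in> SK \<Longrightarrow> (\<forall>x. f x \<noteq> 0) \<Longrightarrow> (\<lambda>x. inverse (f x)) \<in> SK"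
| invf: "f \<in> SK \<Longrightarrow> bij f \<Longrightarrow> (\<forall>x. deriv f x \<noteq> 0) \<Longrightarrow> inv f \<in> SK"
| loc: "(\<forall>x. \<exists>S s. open S \<and> x \<in> S \<and> s \<in> SK \<and> (\<forall>y\<in>S. f y = s y)) \<Longrightarrow> f \<in> SK"


lemma SK_deriv:
  assumes "f \<in> SK"
  shows "(\<forall>x. DERIV f x :> deriv f x) \<and> deriv f \<in> SK"
  using assms
proof (induction rule: SK.induct)
  case (base f)
  then show ?case using smooth_DERIV smooth_deriv SK.base by blast
next
  case (add f g)
  have d: "DERIV (\<lambda>x. f x + g x) x :> deriv f x + deriv g x" for x
    using add by (auto intro!: derivative_eq_intros)
  then have "deriv (\<lambda>x. f x + g x) = (\<lambda>x. deriv f x + deriv g x)"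
    by (auto intro!: ext DERIV_imp_deriv)
  moreover have "(\<lambda>x. deriv f x + deriv g x) \<in> SK" using add by (intro SK.add) auto
  ultimately show ?case using d by auto
next
  case (mult f g)
  have d: "DERIV (\<lambda>x. f x * g x) x :> deriv f x * g x + f x * deriv g x" for x
    using mult by (auto intro!: derivative_eq_intros)
  then have "deriv (\<lambda>x. f x * g x) = (\<lambda>x. deriv f x * g x + f x * deriv g x)"
    by (auto intro!: ext DERIV_imp_deriv)
  moreover have "(\<lambda>x. deriv f x * g x + f x * deriv g x) \<in> SK"
    using mult by (intro SK.add SK.mult) auto
  ultimately show ?case using d by auto
next
  case (comp f g)
  have d: "DERIV (\<lambda>x. f (g x)) x :> deriv f (g x) * deriv g x" for x
    using comp DERIV_chain2 by blast
  then have "deriv (\<lambda>x. f (g x)) = (\<lambda>x. deriv f (g x) * deriv g x)"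
    by (auto intro!: ext DERIV_imp_deriv)
  moreover have "(\<lambda>x. deriv f (g x) * deriv g x) \<in> SK"
    using comp by (intro SK.mult[OF SK.comp]) auto
  ultimately show ?case using d by auto
next
  case (recip f)
  have d: "DERIV (\<lambda>x. inverse (f x)) x :> (\<lambda>_. -1) x * (deriv f x * ((\<lambda>x. inverse (f x)) x * (\<lambda>x. inverse (f x)) x))" for x
  proof -
    have "DERIV (\<lambda>x. inverse (f x)) x :> (- (deriv f x * inverse(f x ^ Suc (Suc 0))))"
      using recip by (intro DERIV_inverse_fun) auto
    moreover have "(- (deriv f x * inverse(f x ^ Suc (Suc 0)))) = (\<lambda>_. -1) x * (deriv f x * ((\<lambda>x. inverse (f x)) x * (\<lambda>x. inverse (f x)) x))"
      by (simp add: power2_eq_square)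
    ultimately show ?thesis by simp
  qed
  then have e: "deriv (\<lambda>x. inverse (f x)) = (\<lambda>x. (\<lambda>_. -1) x * (deriv f x * ((\<lambda>x. inverse (f x)) x * (\<lambda>x. inverse (f x)) x)))"
    by (intro ext DERIV_imp_deriv)
  have i: "(\<lambda>x. inverse (f x)) \<in> SK" using recip by (intro SK.recip) auto
  have "deriv (\<lambda>x. inverse (f x)) \<in> SK" unfolding e
    by (rule SK.mult[OF SK.base[OF smooth_const] SK.mult[OF _ SK.mult[OF i i]]]) (use recip in auto)
  then show ?case using d e by (simp add: DERIV_imp_deriv)
next
  case (invf f)
  have fi: "f (inv f y) = y" for y using \<open>bij f\<close> by (meson bij_inv_eq_iff)
  have if_: "inv f (f y) = y" for y using \<open>bij f\<close> by (simp add: bij_is_inj)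
  have d: "DERIV (inv f) y :> inverse (deriv f (inv f y))" for y
  proof (rule DERIV_inverse_function[where a="y-1" and b="y+1"])
    show "DERIV f (inv f y) :> deriv f (inv f y)" using invf by auto
    show "deriv f (inv f y) \<noteq> 0" using invf by auto
    show "isCont (inv f) y"
      using isCont_inverse_function[of 1 "inv f y" "inv f" f] if_ fi invf
      by (metis DERIV_isCont zero_less_one)
  qed (auto simp: fi)
  then have e: "deriv (inv f) = (\<lambda>y. inverse (deriv f (inv f y)))"
    by (auto intro!: ext DERIV_imp_deriv)
  have "inv f \<in> SK" using invf by (intro SK.invf) auto
  then have "deriv (inv f) \<in> SK" unfolding e using invf
    by (intro SK.recip[OF SK.comp]) auto
  then show ?case using d e by simp
next
  case (loc f)
  have d: "DERIV f x :> deriv f x" for x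
  proof -
    obtain S s where S: "open S" "x \<in> S" "s \<in> SK" "\<forall>x. DERIV s x :> deriv s x" "\<forall>y\<in>S. f y = s y"
      using loc by metis
    have "DERIV f x :> deriv s x"
      by (rule has_field_derivative_transform_within_open[OF _ S(1,2)]) (use S in auto)
    then show ?thesis by (simp add: DERIV_imp_deriv)
  qed
  have "deriv f \<in> SK"
  proof (rule SK.loc, intro allI)
    fix x
    obtain S s where S: "open S" "x \<in> S" "s \<in> SK" "\<forall>x. DERIV s x :> deriv s x" "deriv s \<in> SK" "\<forall>y\<in>S. f y = s y"
      using loc by metis
    have "\<forall>y\<in>S. deriv f y = deriv s y"
    proof
      fix y assume y: "y \<in> S"
      have "DERIV f y :> deriv s y"
        by (rule has_field_derivative_transform_within_open[OF _ S(1) y]) (use S in auto)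
      then show "deriv f y = deriv s y" by (simp add: DERIV_imp_deriv)
    qed
    then show "\<exists>S s. open S \<and> x \<in> S \<and> s \<in> SK \<and> (\<forall>y\<in>S. deriv f y = s y)"
      using S by blast
  qed
  then show ?case using d by auto
qed

lemma SK_smooth:
  assumes "f \<in> SK" shows "smooth_real f"
proof -
  have "\<forall>f\<in>SK. (deriv ^^ n) f \<in> SK" for n
  proof (induction n)
    case (Suc n) then show ?case
      using SK_deriv by (simp add: funpow_Suc_right del: funpow.simps)
  qed simp
  then show ?thesis unfolding smooth_real_def
    using assms SK_deriv real_differentiable_def by blast
qed


unbundle no vec_syntax
notation fps_nth (infixl \<open>$\<close> 75)

lemma smooth_add: "smooth_real f \<Longrightarrow> smooth_real g \<Longrightarrow> smooth_real (\<lambda>x. f x + g x)"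
  by (rule SK_smooth[OF SK.add[OF SK.base SK.base]])
lemma smooth_mult: "smooth_real f \<Longrightarrow> smooth_real g \<Longrightarrow> smooth_real (\<lambda>x. f x * g x)"
  by (rule SK_smooth[OF SK.mult[OF SK.base SK.base]])
lemma smooth_comp: "smooth_real f \<Longrightarrow> smooth_real g \<Longrightarrow> smooth_real (\<lambda>x. f (g x))"
  by (rule SK_smooth[OF SK.comp[OF SK.base SK.base]])

lemma deriv_add_fun: "smooth_real f \<Longrightarrow> smooth_real g \<Longrightarrow> deriv (\<lambda>x. f x + g x) = (\<lambda>x. deriv f x + deriv g x)"
  by (intro ext DERIV_imp_deriv derivative_intros smooth_DERIV)
lemma deriv_mult_fun: "smooth_real f \<Longrightarrow> smooth_real g \<Longrightarrow> deriv (\<lambda>x. f x * g x) = (\<lambda>x. deriv f x * g x + f x * deriv g x)"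
  by (intro ext DERIV_imp_deriv) (auto intro!: derivative_eq_intros smooth_DERIV)
lemma deriv_comp_fun: "smooth_real f \<Longrightarrow> smooth_real g \<Longrightarrow> deriv (\<lambda>x. f (g x)) = (\<lambda>x. deriv f (g x) * deriv g x)"
  by (intro ext DERIV_imp_deriv DERIV_chain2 smooth_DERIV)

lemma funpow_deriv_add:
  "smooth_real f \<Longrightarrow> smooth_real g \<Longrightarrow> (deriv ^^ n) (\<lambda>x. f x + g x) = (\<lambda>x. (deriv ^^ n) f x + (deriv ^^ n) g x)"
proof (induction n arbitrary: f g)
  case (Suc n)
  have "(deriv ^^ Suc n) (\<lambda>x. f x + g x) = (deriv ^^ n) (\<lambda>x. deriv f x + deriv g x)"
    using Suc.prems by (simp add: funpow_Suc_right deriv_add_fun del: funpow.simps)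
  also have "\<dots> = (\<lambda>x. (deriv ^^ n) (deriv f) x + (deriv ^^ n) (deriv g) x)"
    using Suc by (simp add: smooth_deriv)
  finally show ?case by (simp add: funpow_Suc_right del: funpow.simps)
qed simp

lemma taylor0_nth: "taylor0 f $ n = (deriv ^^ n) f 0 / fact n"
  by (simp add: taylor0_def)

lemma taylor0_add: "smooth_real f \<Longrightarrow> smooth_real g \<Longrightarrow> taylor0 (\<lambda>x. f x + g x) = taylor0 f + taylor0 g"
  by (intro fps_ext) (simp add: taylor0_nth funpow_deriv_add add_divide_distrib)

lemma taylor0_deriv: "taylor0 (deriv f) = fps_deriv (taylor0 f)"
proof (intro fps_ext)
  fix n
  have "(deriv ^^ n) (deriv f) = (deriv ^^ Suc n) f" by (simp add: funpow_Suc_right del: funpow.simps)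
  then show "taylor0 (deriv f) $ n = fps_deriv (taylor0 f) $ n"
  proof -
    have c: "a / b = (c+1) * (a / ((c+1)*b))" if "c \<ge> 0" for a b c :: real
      using that by (subst times_divide_eq_right, subst mult_divide_mult_cancel_left) auto
    show ?thesis unfolding fps_deriv_nth taylor0_nth \<open>(deriv ^^ n) (deriv f) = (deriv ^^ Suc n) f\<close>
      by (subst c[of "real n"]) (auto simp: fact_Suc algebra_simps)
  qed
qed

lemma taylor0_Suc: "taylor0 f $ Suc n = taylor0 (deriv f) $ n / of_nat (Suc n)"
  by (simp add: taylor0_deriv field_simps del: of_nat_Suc)

lemma taylor0_mult_nth:
  "\<forall>f g. smooth_real f \<longrightarrow> smooth_real g \<longrightarrow> taylor0 (\<lambda>x. f x * g x) $ n = (taylor0 f * taylor0 g) $ n"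
proof (induction n)
  case 0 then show ?case by (simp add: taylor0_nth)
next
  case (Suc n)
  show ?case
  proof (intro allI impI)
    fix f g :: "real \<Rightarrow> real" assume f: "smooth_real f" and g: "smooth_real g"
    have "taylor0 (\<lambda>x. f x * g x) $ Suc n = taylor0 (\<lambda>x. deriv f x * g x + f x * deriv g x) $ n / of_nat (Suc n)"
      by (simp only: taylor0_Suc deriv_mult_fun f g)
    also have "taylor0 (\<lambda>x. deriv f x * g x + f x * deriv g x) = taylor0 (\<lambda>x. deriv f x * g x) + taylor0 (\<lambda>x. f x * deriv g x)"
      using f g by (intro taylor0_add smooth_mult smooth_deriv)
    also have "(taylor0 (\<lambda>x. deriv f x * g x) + taylor0 (\<lambda>x. f x * deriv g x)) $ n
        = (fps_deriv (taylor0 f) * taylor0 g + taylor0 f * fps_deriv (taylor0 g)) $ n"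
      using Suc.IH f g smooth_deriv[OF f] smooth_deriv[OF g] by (simp add: taylor0_deriv)
    also have "\<dots> = fps_deriv (taylor0 f * taylor0 g) $ n" by (simp add: algebra_simps)
    finally have X: "taylor0 (\<lambda>x. f x * g x) $ Suc n = fps_deriv (taylor0 f * taylor0 g) $ n / of_nat (Suc n)" .
    show "taylor0 (\<lambda>x. f x * g x) $ Suc n = (taylor0 f * taylor0 g) $ Suc n"
      unfolding X by (simp only: fps_deriv_nth) (simp del: of_nat_Suc)
  qed
qed

lemma taylor0_mult: "smooth_real f \<Longrightarrow> smooth_real g \<Longrightarrow> taylor0 (\<lambda>x. f x * g x) = taylor0 f * taylor0 g"
  using taylor0_mult_nth by (intro fps_ext) blast

lemma taylor0_comp_nth:
  "\<forall>f g. smooth_real f \<longrightarrow> smooth_real g \<longrightarrow> g 0 = 0 \<longrightarrow> (\<forall>m\<le>n. taylor0 (\<lambda>x. f (g x)) $ m = (taylor0 f oo taylor0 g) $ m)"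
proof (induction n)
  case 0 then show ?case by (simp add: taylor0_nth)
next
  case (Suc n)
  show ?case
  proof (intro allI impI)
    fix f g :: "real \<Rightarrow> real" and m assume f: "smooth_real f" and g: "smooth_real g" and g0: "g 0 = 0"
      and m: "m \<le> Suc n"
    show "taylor0 (\<lambda>x. f (g x)) $ m = (taylor0 f oo taylor0 g) $ m"
    proof (cases "m \<le> n")
      case True then show ?thesis using Suc.IH f g g0 by simp
    next
      case False
      then have m: "m = Suc n" using m by simp
      have tg0: "taylor0 g $ 0 = 0" using g0 by (simp add: taylor0_nth)
      have IH: "\<forall>k\<le>n. taylor0 (\<lambda>x. deriv f (g x)) $ k = (taylor0 (deriv f) oo taylor0 g) $ k"
        using Suc.IH smooth_deriv[OF f] g g0 by simp
      have "taylor0 (\<lambda>x. f (g x)) $ Suc n = taylor0 (\<lambda>x. deriv f (g x) * deriv g x) $ n / of_nat (Suc n)"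
        by (simp only: taylor0_Suc deriv_comp_fun f g)
      also have "taylor0 (\<lambda>x. deriv f (g x) * deriv g x) = taylor0 (\<lambda>x. deriv f (g x)) * taylor0 (deriv g)"
        by (rule taylor0_mult[OF smooth_comp[OF smooth_deriv[OF f] g] smooth_deriv[OF g]])
      also have "(taylor0 (\<lambda>x. deriv f (g x)) * taylor0 (deriv g)) $ n = ((taylor0 (deriv f) oo taylor0 g) * taylor0 (deriv g)) $ n"
        unfolding fps_mult_nth using IH by (intro sum.cong) auto
      also have "\<dots> = fps_deriv (taylor0 f oo taylor0 g) $ n"
        by (simp only: fps_compose_deriv[OF tg0] taylor0_deriv)
      finally have X: "taylor0 (\<lambda>x. f (g x)) $ Suc n = fps_deriv (taylor0 f oo taylor0 g) $ n / of_nat (Suc n)" .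
      show ?thesis unfolding m X by (simp only: fps_deriv_nth) (simp del: of_nat_Suc)
    qed
  qed
qed

lemma taylor0_comp: "smooth_real f \<Longrightarrow> smooth_real g \<Longrightarrow> g 0 = 0 \<Longrightarrow> taylor0 (\<lambda>x. f (g x)) = taylor0 f oo taylor0 g"
  using taylor0_comp_nth by (intro fps_ext) blast


definition Ef :: "real poly \<Rightarrow> real \<Rightarrow> real" where
  "Ef p t = (if t \<le> 0 then 0 else poly p (inverse t) * exp (- inverse t))"

definition Qp :: "real poly \<Rightarrow> real poly" where
  "Qp p = monom 1 2 * (p - pderiv p)"

lemma poly_exp_limit: fixes p :: "real poly" shows "((\<lambda>s. poly p s * exp (- s)) \<longlongrightarrow> 0) at_top"
proof -
  have e: "poly p s * exp (- s) = (\<Sum>i\<le>degree p. coeff p i * (s ^ i / exp s))" for s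
    unfolding poly_altdef exp_minus sum_distrib_right by (simp add: divide_inverse mult.assoc)
  have "((\<lambda>s. \<Sum>i\<le>degree p. coeff p i * (s ^ i / exp s)) \<longlongrightarrow> (\<Sum>i\<le>degree p. coeff p i * 0)) at_top"
    by (intro tendsto_sum tendsto_mult tendsto_const tendsto_power_div_exp_0)
  then show ?thesis unfolding e by simp
qed

lemma Ef_right_limit: "((\<lambda>y. Ef p y / y) \<longlongrightarrow> 0) (at_right 0)"
proof -
  have l: "((\<lambda>s. poly (pCons 0 p) s * exp (- s)) \<longlongrightarrow> 0) at_top" by (rule poly_exp_limit)
  have "((\<lambda>y. poly (pCons 0 p) (inverse y) * exp (- inverse y)) \<longlongrightarrow> 0) (at_right 0)"
    by (rule filterlim_compose[OF l filterlim_inverse_at_top_right])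
  moreover have "\<forall>\<^sub>F y in at_right 0. poly (pCons 0 p) (inverse y) * exp (- inverse y) = Ef p y / y"
    using eventually_at_right_less[of "0::real"] by eventually_elim (auto simp: Ef_def field_simps)
  ultimately show ?thesis by (rule Lim_transform_eventually)
qed

lemma Ef_deriv: "DERIV (Ef p) t :> Ef (Qp p) t"
proof (cases "t > 0")
  case True
  have "DERIV (\<lambda>t. poly p (inverse t) * exp (- inverse t)) t :>
     poly (pderiv p) (inverse t) * (- inverse (t^2)) * exp (- inverse t) + poly p (inverse t) * (exp (- inverse t) * inverse (t^2))"
    using True
    by (auto intro!: derivative_eq_intros DERIV_chain2[OF poly_DERIV] simp: power2_eq_square)
  moreover have "poly (pderiv p) (inverse t) * (- inverse (t^2)) * exp (- inverse t) + poly p (inverse t) * (exp (- inverse t) * inverse (t^2))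
      = Ef (Qp p) t"
    using True by (simp add: Ef_def Qp_def poly_monom algebra_simps power2_eq_square power_inverse)
  ultimately have "DERIV (\<lambda>t. poly p (inverse t) * exp (- inverse t)) t :> Ef (Qp p) t" by simp
  then show ?thesis
    by (rule has_field_derivative_transform_within_open[where S="{0<..}"]) (use True in \<open>auto simp: Ef_def\<close>)
next
  case False
  show ?thesis
  proof (cases "t < 0")
    case True
    have "DERIV (\<lambda>t. 0) t :> Ef (Qp p) t" using True by (simp add: Ef_def)
    then show ?thesis
      by (rule has_field_derivative_transform_within_open[where S="{..<0}"]) (use True in \<open>auto simp: Ef_def\<close>)
  next
    case False
    with \<open>\<not> t > 0\<close> have t: "t = 0" by simp
    have "((\<lambda>y. (Ef p y - Ef p 0) / (y - 0)) \<longlongrightarrow> 0) (at 0)"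
    proof (rule filterlim_split_at_real)
      show "((\<lambda>y. (Ef p y - Ef p 0) / (y - 0)) \<longlongrightarrow> 0) (at_right 0)"
        using Ef_right_limit[of p] by (simp add: Ef_def)
      have "\<forall>\<^sub>F y in at_left 0. 0 = (Ef p y - Ef p 0) / (y - 0)"
      proof -
        have "(-1::real) < 0" by simp
        from eventually_at_left_real[OF this] show ?thesis by eventually_elim (auto simp: Ef_def)
      qed
      then show "((\<lambda>y. (Ef p y - Ef p 0) / (y - 0)) \<longlongrightarrow> 0) (at_left 0)"
        by (rule Lim_transform_eventually[OF tendsto_const])
    qed
    then show ?thesis unfolding t has_field_derivative_iff by (simp add: Ef_def)
  qed
qed

lemma deriv_Ef: "deriv (Ef p) = Ef (Qp p)"
  by (intro ext DERIV_imp_deriv Ef_deriv)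

lemma smooth_Ef: "smooth_real (Ef p)"
proof -
  have "(deriv ^^ n) (Ef p) = Ef ((Qp ^^ n) p)" for n
    by (induction n) (simp_all add: deriv_Ef)
  then show ?thesis unfolding smooth_real_def
    using Ef_deriv real_differentiable_def by metis
qed

lemma smooth_intro: "(\<And>x. f differentiable (at x)) \<Longrightarrow> smooth_real (deriv f) \<Longrightarrow> smooth_real f"
  unfolding smooth_real_def
  by (metis funpow_0 funpow_Suc_right comp_apply not0_implies_Suc)

lemma smooth_affine: "smooth_real (\<lambda>x. c + d * x)"
proof (rule smooth_intro)
  show "(\<lambda>x. c + d * x) differentiable (at x)" for x by (auto intro!: derivative_intros)
  have "deriv (\<lambda>x. c + d * x) = (\<lambda>_. d)"
    by (intro ext DERIV_imp_deriv) (auto intro!: derivative_eq_intros)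
  then show "smooth_real (deriv (\<lambda>x. c + d * x))" by (simp add: smooth_const)
qed

definition psi :: "real \<Rightarrow> real" where
  "psi t = Ef 1 t * inverse (Ef 1 t + Ef 1 (1 - t))"

lemma Ef1: "Ef 1 t = (if t \<le> 0 then 0 else exp (- inverse t))"
  by (simp add: Ef_def)

lemma Ef1_sum_pos: "Ef 1 t + Ef 1 (1 - t) > 0"
  by (simp add: Ef1 add_pos_nonneg add_nonneg_pos)

lemma smooth_psi: "smooth_real psi"
proof -
  have "(\<lambda>t. Ef 1 t * inverse ((\<lambda>t. Ef 1 t + (\<lambda>t. Ef 1 ((\<lambda>t. 1 + (-1) * t) t)) t) t)) \<in> SK"
    by (rule SK.mult[OF SK.base[OF smooth_Ef] SK.recip[OF SK.add[OF SK.base[OF smooth_Ef]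
          SK.comp[OF SK.base[OF smooth_Ef] SK.base[OF smooth_affine]]]]])
       (use Ef1_sum_pos in \<open>auto simp: less_imp_neq[symmetric]\<close>)
  then have "psi \<in> SK" by (simp add: psi_def[abs_def])
  then show ?thesis by (rule SK_smooth)
qed

lemma psi_0: "t \<le> 0 \<Longrightarrow> psi t = 0"
  by (simp add: psi_def Ef1)

lemma psi_1: "t \<ge> 1 \<Longrightarrow> psi t = 1"
  by (simp add: psi_def Ef1)

lemma psi_range: "0 \<le> psi t" "psi t \<le> 1"
proof -
  have a: "Ef 1 t \<ge> 0" "Ef 1 (1 - t) \<ge> 0" by (simp_all add: Ef1)
  show "0 \<le> psi t" unfolding psi_def using a Ef1_sum_pos[of t] by simp
  show "psi t \<le> 1" unfolding psi_def using a Ef1_sum_pos[of t]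
    by (simp add: field_simps)
qed

lemma psi_deriv_bound: "\<exists>C>0. \<forall>t. \<bar>deriv psi t\<bar> \<le> C"
proof -
  have "continuous_on {0..1} (deriv psi)"
    using smooth_psi[THEN smooth_deriv] smooth_DERIV
    by (meson DERIV_isCont continuous_at_imp_continuous_on)
  then have "bounded (deriv psi ` {0..1})"
    by (intro compact_imp_bounded compact_continuous_image) auto
  then obtain C where C: "C > 0" "\<forall>t\<in>{0..1}. \<bar>deriv psi t\<bar> \<le> C"
    unfolding bounded_pos by auto
  have "\<bar>deriv psi t\<bar> \<le> C" for t
  proof -
    consider "t < 0" | "t \<in> {0..1}" | "t > 1" by force
    then show ?thesis
    proof cases
      case 1
      have "DERIV (\<lambda>_. 0) t :> 0" by simp
      then have "DERIV psi t :> 0"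
        by (rule has_field_derivative_transform_within_open[where S="{..<0}"]) (use 1 psi_0 in auto)
      then show ?thesis using C by (simp add: DERIV_imp_deriv)
    next
      case 2 then show ?thesis using C by auto
    next
      case 3
      have "DERIV (\<lambda>_. 1) t :> 0" by simp
      then have "DERIV psi t :> 0"
        by (rule has_field_derivative_transform_within_open[where S="{1<..}"]) (use 3 psi_1 in auto)
      then show ?thesis using C by (simp add: DERIV_imp_deriv)
    qed
  qed
  then show ?thesis using C by blast
qed


lemma diffeo_DERIV: "diffeo f \<Longrightarrow> DERIV f x :> deriv f x"
  unfolding diffeo_def using smooth_DERIV by blast

lemma diffeo_inv: "diffeo f \<Longrightarrow> diffeo (inv f)"
  unfolding diffeo_def by (simp add: bij_imp_bij_inv inv_inv_eq)

lemma bij_f_inv: "bij f \<Longrightarrow> f (inv f y) = y"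
  by (meson bij_inv_eq_iff)

lemma bij_inv_f: "bij f \<Longrightarrow> inv f (f y) = y"
  by (simp add: bij_is_inj)

lemma diffeo_deriv_nz: assumes "diffeo f" shows "deriv f x \<noteq> 0"
proof -
  have b: "bij f" using assms by (simp add: diffeo_def)
  have "DERIV (\<lambda>y. f (inv f y)) (f x) :> deriv f (inv f (f x)) * deriv (inv f) (f x)"
    by (intro DERIV_chain2 diffeo_DERIV assms diffeo_inv)
  moreover have "(\<lambda>y. f (inv f y)) = (\<lambda>y. y)" using b by (simp add: bij_f_inv)
  ultimately have "DERIV (\<lambda>y. y) (f x) :> deriv f x * deriv (inv f) (f x)"
    using b by (simp add: bij_inv_f)
  moreover have "DERIV (\<lambda>y. y) (f x) :> 1" by simp
  ultimately have "deriv f x * deriv (inv f) (f x) = 1" by (rule DERIV_unique)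
  then show ?thesis by auto
qed

lemma decr_deriv_nonpos:
  fixes f :: "real \<Rightarrow> real"
  assumes "DERIV f x :> D" and "\<forall>x y. x < y \<longrightarrow> f y < f x"
  shows "D \<le> 0"
proof (rule ccontr)
  assume "\<not> D \<le> 0"
  then obtain d where "d > 0" "\<forall>h>0. h < d \<longrightarrow> f x < f (x + h)"
    using DERIV_pos_inc_right[OF assms(1)] by force
  then have "f x < f (x + d/2)" by simp
  moreover have "f (x + d/2) < f x" using assms(2) \<open>d > 0\<close> by simp
  ultimately show False by simp
qed

lemma smooth_diffeo:
  assumes "smooth_real f" "bij f" "\<And>x. deriv f x \<noteq> 0"
  shows "diffeo f"
  unfolding diffeo_def using assms SK_smooth[OF SK.invf[OF SK.base[OF assms(1)] assms(2)]] by blast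

lemma const_funpow_deriv: "(deriv ^^ m) (\<lambda>_::real. c::real) = (\<lambda>_. if m = 0 then c else 0)"
proof (induction m arbitrary: c)
  case (Suc m)
  have "deriv (\<lambda>_::real. c) = (\<lambda>_. 0)" by (rule ext) simp
  then show ?case using Suc by (simp add: funpow_Suc_right del: funpow.simps)
qed simp

lemma taylor0_id: "taylor0 (\<lambda>x. x) = fps_X"
proof (intro fps_ext)
  fix n
  have d: "deriv (\<lambda>x::real. x) = (\<lambda>_. 1)" by (rule ext) simp
  show "taylor0 (\<lambda>x. x) $ n = fps_X $ n"
  proof (cases n)
    case 0 then show ?thesis by (simp add: taylor0_def)
  next
    case (Suc m)
    then show ?thesis
      by (simp add: taylor0_def funpow_Suc_right d const_funpow_deriv del: funpow.simps)
  qed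
qed

lemma surj_incr:
  fixes u :: "real \<Rightarrow> real"
  assumes c: "continuous_on UNIV u" and lo: "\<And>t. \<exists>x. u x \<le> t" and hi: "\<And>t. \<exists>x. u x \<ge> t"
    and m: "strict_mono u"
  shows "surj u"
proof -
  have "\<exists>x. u x = t" for t
  proof -
    obtain a b where ab: "u a \<le> t" "u b \<ge> t" using lo hi by blast
    have "a \<le> b"
    proof (rule ccontr)
      assume "\<not> a \<le> b"
      then have "u b < u a" using m by (simp add: strict_mono_less)
      then show False using ab by simp
    qed
    then show ?thesis using IVT'[of u a t b] ab continuous_on_subset[OF c] by blast
  qed
  then show ?thesis by (metis surjI)
qed

definition phi :: "(real \<Rightarrow> real) \<Rightarrow> real \<Rightarrow> real" where
  "phi f = (\<lambda>x. (x - f x) / 2)"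

lemma phi_props:
  assumes dm: "diffeo_minus f" and f0: "f 0 = 0"
  shows "smooth_real (phi f)" "\<And>x. DERIV (phi f) x :> (1 - deriv f x) / 2"
    "\<And>x. deriv (phi f) x \<ge> 1/2" "strict_mono (phi f)" "bij (phi f)" "diffeo (phi f)" "phi f 0 = 0"
proof -
  have df: "diffeo f" and decr: "\<forall>x y. x < y \<longrightarrow> f y < f x" using dm by (auto simp: diffeo_minus_def)
  have e: "phi f = (\<lambda>x. (\<lambda>x. 0 + (1/2) * x) x + (\<lambda>x. (\<lambda>_. -1/2) x * f x) x)"
    by (auto simp: phi_def field_simps)
  have "phi f \<in> SK" unfolding e
    by (rule SK.add[OF SK.base[OF smooth_affine] SK.mult[OF SK.base[OF smooth_const] SK.base]])
       (use df in \<open>simp add: diffeo_def\<close>)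
  then show sm: "smooth_real (phi f)" by (rule SK_smooth)
  show d: "DERIV (phi f) x :> (1 - deriv f x) / 2" for x
    unfolding phi_def using diffeo_DERIV[OF df, of x] by (auto intro!: derivative_eq_intros)
  show dge: "deriv (phi f) x \<ge> 1/2" for x
    using DERIV_imp_deriv[OF d[of x]] decr_deriv_nonpos[OF diffeo_DERIV[OF df] decr] by simp
  show sm: "strict_mono (phi f)"
    unfolding strict_mono_def phi_def using decr by force
  have le: "f x \<le> 0" if "x \<ge> 0" for x
  proof (cases "x = 0")
    case False then have "0 < x" using that by simp
    then show ?thesis using decr f0 by force
  qed (simp add: f0)
  have ge: "f x \<ge> 0" if "x \<le> 0" for x
  proof (cases "x = 0")
    case False then have "x < 0" using that by simp
    then show ?thesis using decr f0 by force
  qed (simp add: f0)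
  have "surj (phi f)"
  proof (rule surj_incr[OF _ _ _ sm])
    show "continuous_on UNIV (phi f)" using d by (meson DERIV_isCont continuous_at_imp_continuous_on)
    show "\<exists>x. phi f x \<le> t" for t
      using ge[of "-2*\<bar>t\<bar>"] by (intro exI[of _ "-2*\<bar>t\<bar>"]) (simp add: phi_def)
    show "\<exists>x. phi f x \<ge> t" for t
      using le[of "2*\<bar>t\<bar>"] by (intro exI[of _ "2*\<bar>t\<bar>"]) (simp add: phi_def)
  qed
  then show b: "bij (phi f)" using sm by (simp add: bij_def strict_mono_imp_inj_on)
  have "deriv (phi f) x \<noteq> 0" for x
    using dge[of x] by linarith
  then show "diffeo (phi f)" using smooth_diffeo sm b \<open>smooth_real (phi f)\<close> by blast
  show "phi f 0 = 0" by (simp add: phi_def f0)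
qed

lemma invol_deriv:
  assumes dm: "diffeo_minus f" and f0: "f 0 = 0" and d: "d > 0" and inv: "\<forall>x. \<bar>x\<bar> < d \<longrightarrow> f (f x) = x"
  shows "deriv f 0 = -1"
proof -
  have df: "diffeo f" and decr: "\<forall>x y. x < y \<longrightarrow> f y < f x" using dm by (auto simp: diffeo_minus_def)
  have "DERIV (\<lambda>x. f (f x)) 0 :> deriv f (f 0) * deriv f 0"
    by (intro DERIV_chain2 diffeo_DERIV df)
  then have 1: "DERIV (\<lambda>x. f (f x)) 0 :> deriv f 0 * deriv f 0" by (simp add: f0)
  have "DERIV (\<lambda>x. x) 0 :> 1" by simp
  then have 2: "DERIV (\<lambda>x. f (f x)) 0 :> 1"
    by (rule has_field_derivative_transform_within_open[where S="ball 0 d"]) (use d inv in \<open>auto simp: dist_real_def\<close>)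
  have "deriv f 0 * deriv f 0 = 1" using DERIV_unique[OF 1 2] .
  moreover have "deriv f 0 \<le> 0" by (rule decr_deriv_nonpos[OF diffeo_DERIV[OF df] decr])
  ultimately show ?thesis
  proof -
    assume a: "deriv f 0 * deriv f 0 = 1" "deriv f 0 \<le> 0"
    have "(deriv f 0 + 1) * (deriv f 0 - 1) = 0" using a(1) by (simp add: algebra_simps)
    then have "deriv f 0 + 1 = 0 \<or> deriv f 0 - 1 = 0" by simp
    then show ?thesis using a(2) by auto
  qed
qed


context
  fixes f g :: "real \<Rightarrow> real"
  assumes dmf: "diffeo_minus f" and dmg: "diffeo_minus g" and f0: "f 0 = 0" and g0: "g 0 = 0"
    and FG: "f \<circ> f = g \<circ> g" and int: "0 \<in> interior {x. f (f x) = x}"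
begin

lemma df: "diffeo f" and dg: "diffeo g" and decf: "\<And>x y. x < y \<Longrightarrow> f y < f x"
  and decg: "\<And>x y. x < y \<Longrightarrow> g y < g x" and bf: "bij f" and bg: "bij g"
  and FG': "\<And>x. f (f x) = g (g x)"
  using dmf dmg FG by (auto simp: diffeo_minus_def diffeo_def fun_eq_iff)

lemma dprop: "\<exists>d>0. \<forall>x. \<bar>x\<bar> < d \<longrightarrow> f (f x) = x \<and> g (g x) = x"
proof -
  obtain e where e: "e > 0" "ball 0 e \<subseteq> {x. f (f x) = x}"
    using int by (meson mem_interior)
  then show ?thesis using FG' by (intro exI[of _ e]) (auto simp: dist_real_def subset_eq)
qed

definition k0 :: "real \<Rightarrow> real" where
  "k0 = (\<lambda>x. inv (phi g) (phi f x))"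

lemma k0_SK: "k0 \<in> SK"
  unfolding k0_def
  by (rule SK.comp[OF SK.base SK.base])
     (use phi_props(6)[OF dmg g0] phi_props(1)[OF dmf f0] in \<open>auto simp: diffeo_def\<close>)

lemma k0_smooth: "smooth_real k0" by (rule SK_smooth[OF k0_SK])

lemma k0_DERIV: "DERIV k0 x :> deriv k0 x" by (rule smooth_DERIV[OF k0_smooth])

lemma phig_k0: "phi g (k0 x) = phi f x"
  unfolding k0_def using phi_props(5)[OF dmg g0] by (simp add: bij_f_inv)

lemma k0_0: "k0 0 = 0"
  using phig_k0[of 0] phi_props(7)[OF dmf f0] phi_props(7)[OF dmg g0] phi_props(5)[OF dmg g0]
  by (metis bij_inv_f k0_def)

lemma k0_deriv_eq: "deriv (phi g) (k0 x) * deriv k0 x = deriv (phi f) x"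
proof -
  have "DERIV (\<lambda>x. phi g (k0 x)) x :> deriv (phi g) (k0 x) * deriv k0 x"
    by (intro DERIV_chain2[OF smooth_DERIV k0_DERIV] phi_props(1)[OF dmg g0])
  moreover have "DERIV (\<lambda>x. phi g (k0 x)) x :> deriv (phi f) x"
    unfolding phig_k0 by (rule smooth_DERIV[OF phi_props(1)[OF dmf f0]])
  ultimately show ?thesis by (rule DERIV_unique)
qed

lemma k0_deriv_pos: "deriv k0 x > 0"
proof -
  have "deriv (phi g) (k0 x) \<ge> 1/2" "deriv (phi f) x \<ge> 1/2"
    using phi_props(3)[OF dmg g0] phi_props(3)[OF dmf f0] by auto
  show ?thesis
  proof (rule ccontr)
    assume "\<not> deriv k0 x > 0"
    then have "deriv (phi g) (k0 x) * deriv k0 x \<le> 0" using \<open>deriv (phi g) (k0 x) \<ge> 1/2\<close>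
      by (intro mult_nonneg_nonpos) auto
    then show False using k0_deriv_eq[of x] \<open>deriv (phi f) x \<ge> 1/2\<close> by linarith
  qed
qed

lemma k0_deriv_0: "deriv k0 0 = 1"
proof -
  obtain d where d: "d > 0" "\<forall>x. \<bar>x\<bar> < d \<longrightarrow> f (f x) = x \<and> g (g x) = x" using dprop by blast
  have f': "deriv f 0 = -1" by (rule invol_deriv[OF dmf f0 d(1)]) (use d in auto)
  have g': "deriv g 0 = -1" by (rule invol_deriv[OF dmg g0 d(1)]) (use d in auto)
  have "deriv (phi f) 0 = 1" using DERIV_imp_deriv[OF phi_props(2)[OF dmf f0, of 0]] f' by simp
  moreover have "deriv (phi g) 0 = 1" using DERIV_imp_deriv[OF phi_props(2)[OF dmg g0, of 0]] g' by simp
  ultimately show ?thesis using k0_deriv_eq[of 0] by (simp add: k0_0)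
qed

lemma k0_conj:
  assumes d: "\<forall>x. \<bar>x\<bar> < d \<longrightarrow> f (f x) = x \<and> g (g x) = x" and x: "\<bar>x\<bar> < d" "\<bar>k0 x\<bar> < d"
  shows "k0 (f x) = g (k0 x)"
proof -
  have "phi g (g (k0 x)) = - phi g (k0 x)" using d x by (simp add: phi_def field_simps)
  also have "\<dots> = - phi f x" by (simp add: phig_k0)
  also have "\<dots> = phi f (f x)" using d x by (simp add: phi_def field_simps)
  finally have "phi g (g (k0 x)) = phi f (f x)" .
  then have "inv (phi g) (phi g (g (k0 x))) = k0 (f x)" by (simp add: k0_def)
  then show ?thesis using phi_props(5)[OF dmg g0] by (simp add: bij_inv_f)
qed

lemma main_k: "\<exists>k. diffeo_plus k \<and> k 0 = 0 \<and> (\<forall>x. k (f x) = g (k x))"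
proof -
  obtain d where d: "d > 0" "\<forall>x. \<bar>x\<bar> < d \<longrightarrow> f (f x) = x \<and> g (g x) = x" using dprop by blast
  obtain C where C: "C > 0" "\<forall>t. \<bar>deriv psi t\<bar> \<le> C" using psi_deriv_bound by blast
  define \<epsilon> where "\<epsilon> = 1 / (4 * (C + 1))"
  have \<epsilon>: "\<epsilon> > 0" "\<epsilon> \<le> 1/4" "(2 * C + 1) * \<epsilon> \<le> 1/2"
    using C by (auto simp: \<epsilon>_def field_simps)
  have "isCont (deriv k0) 0"
    using smooth_DERIV[OF smooth_deriv[OF k0_smooth]] DERIV_isCont by blast
  then obtain \<eta> where \<eta>: "\<eta> > 0" "\<forall>x. \<bar>x\<bar> < \<eta> \<longrightarrow> \<bar>deriv k0 x - 1\<bar> < \<epsilon>"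
    unfolding continuous_at_eps_delta using \<epsilon>(1) k0_deriv_0 by (force simp: dist_real_def)
  have mvt: "\<bar>k0 y - y\<bar> \<le> \<epsilon> * y" if "0 \<le> y" "y < \<eta>" for y
  proof (cases "y = 0")
    case True then show ?thesis by (simp add: k0_0)
  next
    case False
    then have "0 < y" using that by simp
    then obtain z where z: "0 < z" "z < y" "k0 y - k0 0 = (y - 0) * deriv k0 z"
      using MVT2[of 0 y k0 "deriv k0"] k0_DERIV by blast
    then have "k0 y - y = y * (deriv k0 z - 1)" by (simp add: k0_0 algebra_simps)
    then have "\<bar>k0 y - y\<bar> = y * \<bar>deriv k0 z - 1\<bar>" using \<open>0 < y\<close> by (simp add: abs_mult)
    also have "\<dots> \<le> y * \<epsilon>"
    proof (rule mult_left_mono)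
      have "\<bar>z\<bar> < \<eta>" using z that by auto
      then show "\<bar>deriv k0 z - 1\<bar> \<le> \<epsilon>" using \<eta>(2) by force
    qed (use that in auto)
    finally show ?thesis by (simp add: mult.commute)
  qed
  define a where "a = min d \<eta> / 4"
  have a: "a > 0" "2 * a < \<eta>" "4 * a \<le> d" "a < d" using d \<eta> by (auto simp: a_def)
  have k0_small: "0 \<le> k0 y \<and> k0 y < d \<and> k0 y \<le> 4 * a" if "0 \<le> y" "y \<le> 2 * a" for y
  proof -
    have m: "\<bar>k0 y - y\<bar> \<le> \<epsilon> * y" using mvt that a by auto
    have "\<epsilon> * y \<le> (1/4) * y" using \<epsilon> that by (intro mult_right_mono) auto
    then show ?thesis using m that a unfolding abs_le_iff by linarith
  qed
  define \<rho> where "\<rho> = (\<lambda>x. psi (2 + (-1/a) * x))"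
  have \<rho>_smooth: "smooth_real \<rho>" unfolding \<rho>_def by (rule smooth_comp[OF smooth_psi smooth_affine])
  have \<rho>1: "\<rho> x = 1" if "x \<le> a" for x
    unfolding \<rho>_def using a that by (intro psi_1) (auto simp: field_simps)
  have \<rho>0: "\<rho> x = 0" if "x \<ge> 2 * a" for x
    using a that unfolding \<rho>_def by (intro psi_0) (auto simp: field_simps)
  have \<rho>r: "0 \<le> \<rho> x" "\<rho> x \<le> 1" for x unfolding \<rho>_def using psi_range by auto
  have \<rho>d: "deriv \<rho> x = deriv psi (2 + (-1/a) * x) * (-1/a)" for x
    unfolding \<rho>_def
    by (intro DERIV_imp_deriv DERIV_chain2[OF smooth_DERIV[OF smooth_psi]]) (use a in \<open>auto intro!: derivative_eq_intros\<close>)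
  have \<rho>db: "\<bar>deriv \<rho> x\<bar> \<le> C / a" for x
    unfolding \<rho>d using C a by (simp add: abs_mult divide_right_mono)
  define k1 where "k1 = (\<lambda>x. x + \<rho> x * (k0 x - x))"
  have k1_eq: "k1 = (\<lambda>x. (\<lambda>x. 0 + 1 * x) x + \<rho> x * (k0 x + (\<lambda>x. 0 + (-1) * x) x))"
    by (auto simp: k1_def)
  have k1_SK: "k1 \<in> SK" unfolding k1_eq
    by (rule SK.add[OF SK.base[OF smooth_affine] SK.mult[OF SK.base[OF \<rho>_smooth] SK.add[OF k0_SK SK.base[OF smooth_affine]]]])
  have k1_smooth: "smooth_real k1" by (rule SK_smooth[OF k1_SK])
  have k1_k0: "k1 x = k0 x" if "x \<le> a" for x using \<rho>1[OF that] by (simp add: k1_def)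
  have k1_id: "k1 x = x" if "x \<ge> 2 * a" for x using \<rho>0[OF that] by (simp add: k1_def)
  have k1_0: "k1 0 = 0" by (simp add: k1_def k0_0)
  have k1_D: "DERIV k1 x :> 1 + deriv \<rho> x * (k0 x - x) + \<rho> x * (deriv k0 x - 1)" for x
    unfolding k1_def using smooth_DERIV[OF \<rho>_smooth] k0_DERIV
    by (auto intro!: derivative_eq_intros simp: algebra_simps)
  have k1_pos: "\<exists>D. DERIV k1 x :> D \<and> D > 0" for x
  proof -
    consider "x < a" | "a \<le> x \<and> x \<le> 2 * a" | "x > 2 * a" by linarith
    then show ?thesis
    proof cases
      case 1
      have "DERIV k1 x :> deriv k0 x"
        by (rule has_field_derivative_transform_within_open[OF k0_DERIV, where S="{..<a}"])
           (use 1 k1_k0 in auto)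
      then show ?thesis using k0_deriv_pos by blast
    next
      case 2
      then have x: "0 \<le> x" "x \<le> 2 * a" "\<bar>x\<bar> < \<eta>" using a by auto
      have "\<bar>deriv \<rho> x * (k0 x - x)\<bar> \<le> (C / a) * (\<epsilon> * (2 * a))"
        unfolding abs_mult
      proof (rule mult_mono)
        show "\<bar>k0 x - x\<bar> \<le> \<epsilon> * (2 * a)" using mvt[of x] x \<epsilon> by (smt (verit) mult_left_mono)
      qed (use \<rho>db C a in auto)
      also have "\<dots> = 2 * C * \<epsilon>" using a by (simp add: field_simps)
      finally have t1: "\<bar>deriv \<rho> x * (k0 x - x)\<bar> \<le> 2 * C * \<epsilon>" .
      have "\<bar>\<rho> x * (deriv k0 x - 1)\<bar> \<le> 1 * \<epsilon>"
        unfolding abs_mult using \<rho>r[of x] \<eta>(2)[rule_format, OF x(3)] by (intro mult_mono) auto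
      then have "1 + deriv \<rho> x * (k0 x - x) + \<rho> x * (deriv k0 x - 1) > 0"
        using t1 \<epsilon> by (simp add: algebra_simps)
      then show ?thesis using k1_D by blast
    next
      case 3
      have "DERIV (\<lambda>x. x) x :> 1" by simp
      then have "DERIV k1 x :> 1"
        by (rule has_field_derivative_transform_within_open[where S="{2*a<..}"])
           (use 3 k1_id in auto)
      then show ?thesis by auto
    qed
  qed
  have k1_mono: "strict_mono k1"
  proof (rule strict_monoI)
    fix x y :: real assume "x < y"
    then show "k1 x < k1 y" by (rule DERIV_pos_imp_increasing) (rule k1_pos)
  qed
  have k1_le: "k1 x \<le> k1 y \<longleftrightarrow> x \<le> y" for x y using k1_mono by (simp add: strict_mono_less_eq)
  have k1_lt: "k1 x < k1 y \<longleftrightarrow> x < y" for x y using k1_mono by (simp add: strict_mono_less)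
  have k1_cont: "continuous_on UNIV k1"
    using k1_D by (meson DERIV_isCont continuous_at_imp_continuous_on)
  have k1_onto: "\<exists>w\<ge>0. k1 w = z" if "z \<ge> 0" for z
  proof -
    define b where "b = max z (2 * a)"
    have "k1 0 \<le> z" "z \<le> k1 b" "0 \<le> b" using that a k1_0 k1_id[of b] by (auto simp: b_def)
    then obtain w where "0 \<le> w" "w \<le> b" "k1 w = z"
      using IVT'[of k1 0 z b] continuous_on_subset[OF k1_cont] by blast
    then show ?thesis by blast
  qed
  have F_mono: "f (f x) < f (f y)" if "x < y" for x y using decf[OF decf[OF that]] .
  have Fcomm: "k1 (f (f y)) = f (f (k1 y))" if "y \<ge> 0" for y
  proof (cases "y \<le> 2 * a")
    case True
    have "\<bar>y\<bar> < d" using True that a by auto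
    then have Fy: "f (f y) = y" using d by auto
    have "0 \<le> k1 y" "k1 y \<le> 2 * a" using k1_le[of 0 y] k1_le[of y "2*a"] k1_0 k1_id[of "2*a"] True that by auto
    then have "\<bar>k1 y\<bar> < d" using a by auto
    then have "f (f (k1 y)) = k1 y" using d by auto
    then show ?thesis using Fy by simp
  next
    case False
    have F2a: "f (f (2 * a)) = 2 * a" using d a by auto
    have "f (f y) > 2 * a" using F_mono[of "2 * a" y] False F2a by simp
    then show ?thesis using k1_id False by simp
  qed
  have fif: "f (inv f x) = x" for x by (rule bij_f_inv[OF bf])
  have iff: "inv f (f x) = x" for x by (rule bij_inv_f[OF bf])
  have invf_pos: "inv f x > 0" if "x < 0" for x
  proof (rule ccontr)
    assume "\<not> inv f x > 0"
    then have "f 0 \<le> f (inv f x)" using decf by (cases "inv f x = 0") (auto simp: order.strict_implies_order)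
    then show False using that f0 fif by simp
  qed
  have invf_dec: "inv f y < inv f x" if "x < y" for x y
  proof (rule ccontr)
    assume "\<not> inv f y < inv f x"
    then have "f (inv f y) \<le> f (inv f x)" using decf by (cases "inv f y = inv f x") (auto simp: order.strict_implies_order)
    then show False using that fif by simp
  qed
  define k where "k = (\<lambda>x. if 0 \<le> x then k1 x else g (k1 (inv f x)))"
  have k0': "k 0 = 0" by (simp add: k_def k1_0)
  have kneg: "k x < 0" if "x < 0" for x
  proof -
    have "k1 (inv f x) > 0" using k1_lt[of 0 "inv f x"] k1_0 invf_pos[OF that] by simp
    then have "g (k1 (inv f x)) < g 0" by (rule decg)
    then show ?thesis using that g0 by (simp add: k_def)
  qed
  have knn: "k x \<ge> 0" if "x \<ge> 0" for x using that k1_le[of 0 x] k1_0 by (simp add: k_def)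
  have k_mono: "strict_mono k"
  proof (rule strict_monoI)
    fix x y :: real assume xy: "x < y"
    show "k x < k y"
    proof (cases "0 \<le> x")
      case True then show ?thesis using xy k1_lt by (simp add: k_def)
    next
      case False
      show ?thesis
      proof (cases "0 \<le> y")
        case True then show ?thesis using kneg[of x] knn[of y] False by simp
      next
        case False
        have "k1 (inv f y) < k1 (inv f x)" using k1_lt invf_dec[OF xy] by simp
        then have "g (k1 (inv f x)) < g (k1 (inv f y))" by (rule decg)
        then show ?thesis using False \<open>\<not> 0 \<le> x\<close> by (simp add: k_def)
      qed
    qed
  qed
  have k_surj: "surj k"
  proof -
    have "\<exists>x. k x = y" for y
    proof (cases "y \<ge> 0")
      case True
      then obtain w where "w \<ge> 0" "k1 w = y" using k1_onto by blast
      then show ?thesis by (intro exI[of _ w]) (simp add: k_def)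
    next
      case False
      define z where "z = inv g y"
      have gz: "g z = y" by (simp add: z_def bij_f_inv[OF bg])
      have "z > 0"
      proof (rule ccontr)
        assume "\<not> z > 0"
        then have "g 0 \<le> g z" using decg by (cases "z = 0") (auto simp: order.strict_implies_order)
        then show False using gz g0 False by simp
      qed
      then obtain w where w: "w \<ge> 0" "k1 w = z" using k1_onto by (meson order.strict_implies_order)
      then have "w > 0" using \<open>z > 0\<close> k1_0 by (cases "w = 0") auto
      then have "f w < 0" using decf f0 by force
      then have "k (f w) = y" using w gz by (simp add: k_def iff)
      then show ?thesis by blast
    qed
    then show ?thesis by (metis surjI)
  qed
  have k_conj: "k (f x) = g (k x)" for x
  proof -
    consider "x = 0" | "x > 0" | "x < 0" by linarith
    then show ?thesis
    proof cases
      case 1 then show ?thesis using f0 g0 k0' by simp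
    next
      case 2
      then have "f x < 0" using decf f0 by force
      then show ?thesis using 2 by (simp add: k_def iff)
    next
      case 3
      then have fx: "f x > 0" using decf f0 by force
      define w where "w = inv f x"
      have w: "w > 0" "f w = x" using invf_pos[OF 3] fif by (auto simp: w_def)
      have "k (f x) = k1 (f (f w))" using fx w by (simp add: k_def)
      also have "\<dots> = f (f (k1 w))" by (rule Fcomm) (use w in simp)
      also have "\<dots> = g (g (k1 w))" by (rule FG')
      also have "\<dots> = g (k x)" using 3 by (simp add: k_def w_def)
      finally show ?thesis .
    qed
  qed
  have "isCont f 0" using diffeo_DERIV[OF df] DERIV_isCont by blast
  then obtain \<theta> where \<theta>: "\<theta> > 0" "\<forall>x. \<bar>x\<bar> < \<theta> \<longrightarrow> \<bar>f x\<bar> < a"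
    unfolding continuous_at_eps_delta using a(1) f0 by (force simp: dist_real_def)
  define \<theta>' where "\<theta>' = min \<theta> d"
  have \<theta>': "\<theta>' > 0" "\<theta>' \<le> \<theta>" "\<theta>' \<le> d" using \<theta> d by (auto simp: \<theta>'_def)
  have k1_dpos: "deriv k1 x > 0" for x using k1_pos[of x] DERIV_imp_deriv by blast
  have sm_invf: "smooth_real (inv f)" and sm_g: "smooth_real g"
    using df dg by (auto simp: diffeo_def)
  have loc: "\<exists>S s. open S \<and> x \<in> S \<and> s \<in> SK \<and> (\<forall>y\<in>S. k y = s y) \<and> deriv s x \<noteq> 0" for x
  proof -
    consider "x > 0" | "x < 0" | "x = 0" by linarith
    then show ?thesis
    proof cases
      case 1
      have "\<forall>y\<in>{0<..}. k y = k1 y" by (simp add: k_def)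
      then show ?thesis using 1 k1_SK k1_dpos[of x] by (intro exI[of _ "{0<..}"] exI[of _ k1]) auto
    next
      case 2
      have "\<forall>y\<in>{..<0}. k y = g (k1 (inv f y))" by (simp add: k_def)
      moreover have "(\<lambda>y. g (k1 (inv f y))) \<in> SK"
        by (rule SK.comp[OF SK.base[OF sm_g] SK.comp[OF k1_SK SK.base[OF sm_invf]]])
      moreover have "deriv (\<lambda>y. g (k1 (inv f y))) x \<noteq> 0"
      proof -
        have "deriv (\<lambda>y. g (k1 (inv f y))) x = deriv g (k1 (inv f x)) * deriv (\<lambda>y. k1 (inv f y)) x"
          by (simp add: deriv_comp_fun[OF sm_g smooth_comp[OF k1_smooth sm_invf]])
        also have "\<dots> = deriv g (k1 (inv f x)) * (deriv k1 (inv f x) * deriv (inv f) x)"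
          by (simp add: deriv_comp_fun[OF k1_smooth sm_invf])
        finally show ?thesis
          using diffeo_deriv_nz[OF dg] diffeo_deriv_nz[OF diffeo_inv[OF df]] k1_dpos[of "inv f x"] by simp
      qed
      ultimately show ?thesis using 2 by (intro exI[of _ "{..<0}"] exI[of _ "\<lambda>y. g (k1 (inv f y))"]) auto
    next
      case 3
      have "k y = k0 y" if y: "y \<in> {-\<theta>'<..<a}" for y
      proof (cases "0 \<le> y")
        case True then show ?thesis using y k1_k0 by (simp add: k_def)
      next
        case False
        have ay: "\<bar>y\<bar> < d" "\<bar>y\<bar> < \<theta>" using y False \<theta>' by auto
        then have Fy: "f (f y) = y" using d by auto
        have ify: "inv f y = f y" using iff[of "f y"] Fy by simp
        have fy0: "0 < f y" using decf[of y 0] False f0 by auto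
        have "\<bar>f y\<bar> < a" using \<theta>(2) ay(2) by blast
        then have fy: "0 < f y" "f y < a" using fy0 by auto
        have "\<bar>f y\<bar> < d" "\<bar>k0 (f y)\<bar> < d" using fy a k0_small[of "f y"] by auto
        then have "k0 (f (f y)) = g (k0 (f y))" by (rule k0_conj[OF d(2)])
        then show ?thesis using False fy k1_k0[of "f y"] Fy by (simp add: k_def ify)
      qed
      then show ?thesis using 3 \<theta>' a k0_SK k0_deriv_0
        by (intro exI[of _ "{-\<theta>'<..<a}"] exI[of _ k0]) auto
    qed
  qed
  have k_SK: "k \<in> SK" by (rule SK.loc) (use loc in blast)
  have k_dnz: "deriv k x \<noteq> 0" for x
  proof -
    obtain S s where S: "open S" "x \<in> S" "s \<in> SK" "\<forall>y\<in>S. k y = s y" "deriv s x \<noteq> 0"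
      using loc by blast
    have "DERIV k x :> deriv s x"
      by (rule has_field_derivative_transform_within_open[OF _ S(1,2)]) (use S SK_deriv in auto)
    then show ?thesis using S(5) by (simp add: DERIV_imp_deriv)
  qed
  have k_smooth: "smooth_real k" by (rule SK_smooth[OF k_SK])
  have k_bij: "bij k" using k_mono k_surj by (simp add: bij_def strict_mono_imp_inj_on)
  have "diffeo k" by (rule smooth_diffeo[OF k_smooth k_bij k_dnz])
  then have "diffeo_plus k" using k_mono by (simp add: diffeo_plus_def)
  then show ?thesis using k0' k_conj by blast
qed

end


theorem theorem4p1:
  fixes f g :: "real \<Rightarrow> real"
  assumes "diffeo_minus f" and "diffeo_minus g"
    and "f 0 = 0" and "g 0 = 0"
    and "f \<circ> f = g \<circ> g"
    and "0 \<in> interior {x. f (f x) = x}"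
  shows "(\<exists>h. diffeo_plus h \<and> h 0 = 0 \<and> h \<circ> (f \<circ> f) = (f \<circ> f) \<circ> h \<and>
            taylor0 f = fps_inv (taylor0 h) oo taylor0 g oo taylor0 h)
       \<and> (\<exists>k. diffeo_plus k \<and> f = inv k \<circ> g \<circ> k)"
proof -
  obtain k where k: "diffeo_plus k" "k 0 = 0" "\<And>x. k (f x) = g (k x)"
    using main_k[OF assms] by blast
  have dk: "diffeo k" using k(1) by (simp add: diffeo_plus_def)
  have bk: "bij k" and sk: "smooth_real k" and sik: "smooth_real (inv k)" using dk by (auto simp: diffeo_def)
  have sg: "smooth_real g" using assms(2) by (simp add: diffeo_minus_def diffeo_def)
  have fe: "f = (\<lambda>x. inv k (g (k x)))"
  proof
    fix x show "f x = inv k (g (k x))" using k(3)[of x] bij_inv_f[OF bk, of "f x"] by simp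
  qed
  have conj2: "f = inv k \<circ> g \<circ> k" using fe by (simp add: comp_def)
  have comm: "k \<circ> (f \<circ> f) = (f \<circ> f) \<circ> k"
  proof
    fix x
    have "k (f (f x)) = g (g (k x))" using k(3) by simp
    also have "\<dots> = f (f (k x))" using assms(5) by (simp add: fun_eq_iff)
    finally show "(k \<circ> (f \<circ> f)) x = ((f \<circ> f) \<circ> k) x" by simp
  qed
  have Tk0: "taylor0 k $ 0 = 0" using k(2) by (simp add: taylor0_nth)
  have Tk1: "taylor0 k $ 1 \<noteq> 0" using diffeo_deriv_nz[OF dk, of 0] by (simp add: taylor0_nth)
  have Tg0: "taylor0 g $ 0 = 0" using assms(4) by (simp add: taylor0_nth)
  have Ti0: "fps_inv (taylor0 k) $ 0 = 0" by (simp add: fps_inv_def)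
  have "taylor0 (inv k) oo taylor0 k = taylor0 (\<lambda>x. inv k (k x))"
    by (rule taylor0_comp[OF sik sk k(2), symmetric])
  also have "(\<lambda>x. inv k (k x)) = (\<lambda>x. x)" using bij_inv_f[OF bk] by simp
  finally have BX: "taylor0 (inv k) oo taylor0 k = fps_X" by (simp add: taylor0_id)
  have Tinv: "taylor0 (inv k) = fps_inv (taylor0 k)"
  proof -
    have "taylor0 (inv k) = taylor0 (inv k) oo (taylor0 k oo fps_inv (taylor0 k))"
      by (simp add: fps_inv_right[OF Tk0 Tk1])
    also have "\<dots> = (taylor0 (inv k) oo taylor0 k) oo fps_inv (taylor0 k)"
      by (rule fps_compose_assoc[OF Ti0 Tk0])
    also have "\<dots> = fps_inv (taylor0 k)" by (simp add: BX Ti0)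
    finally show ?thesis .
  qed
  have "taylor0 f = taylor0 (\<lambda>x. inv k ((\<lambda>x. g (k x)) x))" using fe by simp
  also have "\<dots> = taylor0 (inv k) oo taylor0 (\<lambda>x. g (k x))"
    by (rule taylor0_comp[OF sik smooth_comp[OF sg sk]]) (simp add: k(2) assms(4))
  also have "taylor0 (\<lambda>x. g (k x)) = taylor0 g oo taylor0 k"
    by (rule taylor0_comp[OF sg sk k(2)])
  also have "taylor0 (inv k) oo (taylor0 g oo taylor0 k) = taylor0 (inv k) oo taylor0 g oo taylor0 k"
    by (rule fps_compose_assoc[OF Tk0 Tg0])
  finally have T: "taylor0 f = fps_inv (taylor0 k) oo taylor0 g oo taylor0 k" by (simp add: Tinv)
  show ?thesis using k(1,2) comm T conj2 by blast
qed

end
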